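(* (1) For $1\le k\le m-1$, the map $\psi_k:A_k\to(A_0)^{p^k}$, $f\mapsto\big(f(\chi_1\xi_m,\dots,\chi_k\xi_m)\big)_{(\chi_1,\dots,\chi_k)\in\mu_p^k}$, is homogeneous and injective. (2) The image of $M_m=\xi_m^p-\big(\sum_{j=1}^m z_j\xi_j\big)^p$ in $A_{m-1}$ is a non-zero divisor; i.e. multiplication by $M_m$ is an injective homogeneous $A$-linear map $A_{m-1}\to A_{m-1}$ of degree $p$. Consequently $M_1,\dots,M_m$ form a regular sequence in $A[\xi_1,\dots,\xi_m]$.
   Context: $\mu_p=\{\zeta_p^j\mid 0\le j\le p-1\}$, $\zeta_p=e^{2\pi\sqrt{-1}/p}$. $A=\mathbb C[z_1^{\pm1},\dots,z_m^{\pm1},1/R(z)]$ with $R(z)=\prod_{(i_1,\dots,i_m)\in\{1,\dots,p\}^m}(1-\zeta_p^{i_1}z_1-\cdots-\zeta_p^{i_m}z_m)$. $M_k=\xi_k^p-\xi_m^p$ for $1\le k\le m-1$; $A_0=A[\xi_m]$, $A_k=A[\xi_m,\xi_1,\dots,\xi_k]/(M_1,\dots,M_k)$, graded by total degree in the $\xi$'s. *)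

theory Defs
  imports Complex_Main "HOL-Library.Poly_Mapping" "HOL-Library.FuncSet"
begin

datatype var = Z nat | Xi nat

type_synonym mpoly = "(var \<Rightarrow>\<^sub>0 nat) \<Rightarrow>\<^sub>0 complex"

definition PV :: "var \<Rightarrow> mpoly" where
  "PV v = Poly_Mapping.single (Poly_Mapping.single v 1) 1"

definition PC :: "complex \<Rightarrow> mpoly" where
  "PC c = Poly_Mapping.single 0 c"

definition vars :: "mpoly \<Rightarrow> var set" where
  "vars F = \<Union> (Poly_Mapping.keys ` Poly_Mapping.keys F)"

definition xi_deg :: "(var \<Rightarrow>\<^sub>0 nat) \<Rightarrow> nat" where
  "xi_deg \<alpha> = (\<Sum>v\<in>Poly_Mapping.keys \<alpha>. (case v of Z _ \<Rightarrow> 0 | Xi _ \<Rightarrow> Poly_Mapping.lookup \<alpha> v))"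

definition xi_homog :: "nat \<Rightarrow> mpoly \<Rightarrow> bool" where
  "xi_homog d F \<longleftrightarrow> (\<forall>\<alpha>\<in>Poly_Mapping.keys F. xi_deg \<alpha> = d)"

definition subst :: "(var \<Rightarrow> mpoly) \<Rightarrow> mpoly \<Rightarrow> mpoly" where
  "subst \<sigma> F = (\<Sum>\<alpha>\<in>Poly_Mapping.keys F.
      PC (Poly_Mapping.lookup F \<alpha>) * (\<Prod>v\<in>Poly_Mapping.keys \<alpha>. \<sigma> v ^ Poly_Mapping.lookup \<alpha> v))"

definition zeta :: "nat \<Rightarrow> complex" where
  "zeta p = cis (2 * pi / real p)"

definition mu :: "nat \<Rightarrow> complex set" where
  "mu p = {zeta p ^ j | j. j \<le> p - 1}"

definition Rpoly :: "nat \<Rightarrow> nat \<Rightarrow> mpoly" where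
  "Rpoly m p = (\<Prod>i\<in>PiE {1..m} (\<lambda>_. {1..p}).
      1 - (\<Sum>j=1..m. PC (zeta p ^ i j) * PV (Z j)))"

text \<open>Element inverted in A = C[z^{+-1}, 1/R]: z_1 ... z_m R(z).\<close>
definition Den :: "nat \<Rightarrow> nat \<Rightarrow> mpoly" where
  "Den m p = (\<Prod>j=1..m. PV (Z j)) * Rpoly m p"

definition Mgen :: "nat \<Rightarrow> nat \<Rightarrow> nat \<Rightarrow> mpoly" where
  "Mgen m p k = (if k < m then PV (Xi k) ^ p - PV (Xi m) ^ p
                 else PV (Xi m) ^ p - (\<Sum>j=1..m. PV (Z j) * PV (Xi j)) ^ p)"

text \<open>Variables of A_k = A[xi_m, xi_1, ..., xi_k]/(M_1..M_k).\<close>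
definition Vk :: "nat \<Rightarrow> nat \<Rightarrow> var set" where
  "Vk m k = {Z j | j. 1 \<le> j \<and> j \<le> m} \<union> {Xi m} \<union> {Xi j | j. 1 \<le> j \<and> j \<le> k}"

definition in_ideal :: "nat \<Rightarrow> nat \<Rightarrow> var set \<Rightarrow> nat \<Rightarrow> mpoly \<Rightarrow> bool" where
  "in_ideal m p W k G \<longleftrightarrow>
     (\<exists>c. (\<forall>i. vars (c i) \<subseteq> W) \<and> G = (\<Sum>i=1..k. c i * Mgen m p i))"

text \<open>Elements of the localised quotient C[W][1/Den]/(M_1..M_k) are fractions F / Den^n;
  equality of fractions F/Den^n = G/Den^n' in it.\<close>
definition loc_eq :: "nat \<Rightarrow> nat \<Rightarrow> var set \<Rightarrow> nat \<Rightarrow> mpoly \<times> nat \<Rightarrow> mpoly \<times> nat \<Rightarrow> bool" where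
  "loc_eq m p W k f g \<longleftrightarrow>
     (\<exists>N. in_ideal m p W k
        (Den m p ^ N * (Den m p ^ snd g * fst f - Den m p ^ snd f * fst g)))"

text \<open>The chi-component of psi_k: f(xi_m, xi_1..xi_k) \<mapsto> f(xi_m, chi_1 xi_m, ..., chi_k xi_m).\<close>
definition psi :: "nat \<Rightarrow> nat \<Rightarrow> (nat \<Rightarrow> complex) \<Rightarrow> mpoly \<Rightarrow> mpoly" where
  "psi m k \<chi> F = subst (\<lambda>v. case v of
        Xi i \<Rightarrow> (if 1 \<le> i \<and> i \<le> k then PC (\<chi> i) * PV (Xi m) else PV v)
      | Z j \<Rightarrow> PV v) F"

definition regular_sequence :: "nat \<Rightarrow> nat \<Rightarrow> bool" where
  "regular_sequence m p \<longleftrightarrow>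
     (\<forall>i\<in>{1..m}. \<forall>F n. vars F \<subseteq> Vk m m \<longrightarrow>
        loc_eq m p (Vk m m) (i - 1) (Mgen m p i * F, n) (0, 0) \<longrightarrow>
        loc_eq m p (Vk m m) (i - 1) (F, n) (0, 0))
     \<and> \<not> loc_eq m p (Vk m m) m (1, 0) (0, 0)"

end

theory Submission
  imports Defs
begin

instantiation var :: linorder
begin
fun enc :: "var \<Rightarrow> nat" where "enc (Z n) = 2*n" | "enc (Xi n) = 2*n+1"
definition less_eq_var :: "var \<Rightarrow> var \<Rightarrow> bool" where "less_eq_var a b \<longleftrightarrow> enc a \<le> enc b"
definition less_var :: "var \<Rightarrow> var \<Rightarrow> bool" where "less_var a b \<longleftrightarrow> enc a < enc b"
lemma enc_inj: "enc a = enc b \<Longrightarrow> a = b"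
  by (cases a; cases b; auto; presburger)
instance
  by standard (auto simp: less_eq_var_def less_var_def intro: enc_inj)
end

lemma PC_0[simp]: "PC 0 = 0" by (simp add: PC_def)
lemma PC_1[simp]: "PC 1 = 1" by (simp add: PC_def)
lemma PC_add: "PC (a + b) = PC a + PC b" by (simp add: PC_def single_add)
lemma PC_diff: "PC (a - b) = PC a - PC b" by (simp add: PC_def single_diff)
lemma PC_mult: "PC (a * b) = PC a * PC b" by (simp add: PC_def mult_single)
lemma PC_pow: "PC (a ^ n) = PC a ^ n" by (induct n) (simp_all add: PC_mult)
lemma PC_sum: "PC (sum f S) = (\<Sum>x\<in>S. PC (f x))"
  by (induct S rule: infinite_finite_induct) (simp_all add: PC_add)
lemma lookup_PC0: "Poly_Mapping.lookup (PC c) 0 = c" by (simp add: PC_def)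
lemma PC_eq_0[simp]: "PC c = 0 \<longleftrightarrow> c = 0"
  by (metis PC_0 lookup_PC0)
lemma PC_of_nat: "PC (of_nat n) = of_nat n"
  by (simp add: PC_def)

lemma PV_ne0[simp]: "PV v \<noteq> 0"
  by (simp add: PV_def) (metis lookup_single_eq zero_neq_one lookup_zero)

lemma PV_pow: "PV v ^ n = Poly_Mapping.single (Poly_Mapping.single v n) 1"
proof (induct n)
  case 0 then show ?case by simp
next
  case (Suc n) then show ?case
    by (simp add: PV_def mult_single single_add[symmetric] add.commute)
qed

lemma PC_PV: "PC c * PV v = Poly_Mapping.single (Poly_Mapping.single v 1) c"
  by (simp add: PC_def PV_def mult_single)

lemma lookup_PC_PV0: "Poly_Mapping.lookup (PC c * PV v) 0 = 0"
proof -
  have "Poly_Mapping.single v (1::nat) \<noteq> 0"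
    by (metis lookup_single_eq lookup_zero one_neq_zero)
  then show ?thesis by (simp add: PC_PV lookup_single)
qed

lemma poly_expand: "F = (\<Sum>\<alpha>\<in>Poly_Mapping.keys F. Poly_Mapping.single \<alpha> (Poly_Mapping.lookup F \<alpha>))"
proof (rule poly_mapping_eqI)
  fix \<beta>
  have "Poly_Mapping.lookup (\<Sum>\<alpha>\<in>Poly_Mapping.keys F. Poly_Mapping.single \<alpha> (Poly_Mapping.lookup F \<alpha>)) \<beta>
     = (\<Sum>\<alpha>\<in>Poly_Mapping.keys F. (Poly_Mapping.lookup F \<alpha> when \<alpha> = \<beta>))"
    by (simp add: lookup_sum lookup_single)
  also have "\<dots> = Poly_Mapping.lookup F \<beta>"
    by (cases "\<beta> \<in> Poly_Mapping.keys F") (auto simp: when_def in_keys_iff)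
  finally show "Poly_Mapping.lookup F \<beta> = Poly_Mapping.lookup (\<Sum>\<alpha>\<in>Poly_Mapping.keys F. Poly_Mapping.single \<alpha> (Poly_Mapping.lookup F \<alpha>)) \<beta>" by simp
qed

lemma vars_0[simp]: "vars 0 = {}" by (simp add: vars_def)
lemma vars_PC[simp]: "vars (PC c) = {}" by (simp add: vars_def PC_def)
lemma vars_1[simp]: "vars 1 = {}" using vars_PC[of 1] by simp
lemma vars_PV[simp]: "vars (PV v) = {v}" by (simp add: vars_def PV_def)
lemma vars_add: "vars (F + G) \<subseteq> vars F \<union> vars G"
  using keys_add[of F G] by (auto simp: vars_def)
lemma vars_uminus[simp]: "vars (- F) = vars F"
  by (simp add: vars_def keys_def lookup_uminus)
lemma vars_diff: "vars (F - G) \<subseteq> vars F \<union> vars G"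
  using vars_add[of F "-G"] by simp
lemma keys_plus_nat: "Poly_Mapping.keys (\<alpha> + (\<beta>::var \<Rightarrow>\<^sub>0 nat)) = Poly_Mapping.keys \<alpha> \<union> Poly_Mapping.keys \<beta>"
  by (auto simp: in_keys_iff lookup_add)
lemma vars_mult: "vars (F * G) \<subseteq> vars F \<union> vars G"
  using keys_mult[of F G] by (force simp: vars_def keys_plus_nat)
lemma vars_pow: "vars (F ^ n) \<subseteq> vars F"
  by (induct n) (use vars_mult in auto)
lemma vars_sum: "vars (sum f S) \<subseteq> (\<Union>x\<in>S. vars (f x))"
  by (induct S rule: infinite_finite_induct) (use vars_add in auto)
lemma vars_prod: "vars (prod f S) \<subseteq> (\<Union>x\<in>S. vars (f x))"
  by (induct S rule: infinite_finite_induct) (use vars_mult in auto)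
lemma vars_single: "vars (Poly_Mapping.single \<alpha> c) \<subseteq> Poly_Mapping.keys \<alpha>"
  by (simp add: vars_def)
lemma keys_sub_vars: "\<alpha> \<in> Poly_Mapping.keys F \<Longrightarrow> Poly_Mapping.keys \<alpha> \<subseteq> vars F"
  by (auto simp: vars_def)

definition mon :: "(var \<Rightarrow> mpoly) \<Rightarrow> (var \<Rightarrow>\<^sub>0 nat) \<Rightarrow> mpoly" where
  "mon \<sigma> \<alpha> = (\<Prod>v\<in>Poly_Mapping.keys \<alpha>. \<sigma> v ^ Poly_Mapping.lookup \<alpha> v)"

lemma subst_mon: "subst \<sigma> F = (\<Sum>\<alpha>\<in>Poly_Mapping.keys F. PC (Poly_Mapping.lookup F \<alpha>) * mon \<sigma> \<alpha>)"
  by (simp add: subst_def mon_def)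

lemma mon_superset: "finite S \<Longrightarrow> Poly_Mapping.keys \<alpha> \<subseteq> S \<Longrightarrow>
   mon \<sigma> \<alpha> = (\<Prod>v\<in>S. \<sigma> v ^ Poly_Mapping.lookup \<alpha> v)"
  unfolding mon_def by (rule prod.mono_neutral_left) (auto simp: in_keys_iff)

lemma mon_add: "mon \<sigma> (\<alpha> + \<beta>) = mon \<sigma> \<alpha> * mon \<sigma> \<beta>"
proof -
  let ?S = "Poly_Mapping.keys \<alpha> \<union> Poly_Mapping.keys \<beta>"
  have "mon \<sigma> (\<alpha> + \<beta>) = (\<Prod>v\<in>?S. \<sigma> v ^ Poly_Mapping.lookup (\<alpha>+\<beta>) v)"
    by (rule mon_superset) (auto simp: keys_plus_nat)
  also have "\<dots> = (\<Prod>v\<in>?S. \<sigma> v ^ Poly_Mapping.lookup \<alpha> v) * (\<Prod>v\<in>?S. \<sigma> v ^ Poly_Mapping.lookup \<beta> v)"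
    by (simp add: lookup_add power_add prod.distrib)
  also have "\<dots> = mon \<sigma> \<alpha> * mon \<sigma> \<beta>"
    by (subst (1 2) mon_superset[where S="?S"]) auto
  finally show ?thesis .
qed

lemma mon_0[simp]: "mon \<sigma> 0 = 1" by (simp add: mon_def)

lemma subst_superset: "finite S \<Longrightarrow> Poly_Mapping.keys F \<subseteq> S \<Longrightarrow>
   subst \<sigma> F = (\<Sum>\<alpha>\<in>S. PC (Poly_Mapping.lookup F \<alpha>) * mon \<sigma> \<alpha>)"
  unfolding subst_mon by (rule sum.mono_neutral_left) (auto simp: in_keys_iff)

lemma subst_add: "subst \<sigma> (F + G) = subst \<sigma> F + subst \<sigma> G"
proof -
  let ?S = "Poly_Mapping.keys F \<union> Poly_Mapping.keys G"
  have "subst \<sigma> (F + G) = (\<Sum>\<alpha>\<in>?S. PC (Poly_Mapping.lookup (F+G) \<alpha>) * mon \<sigma> \<alpha>)"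
    by (rule subst_superset) (use keys_add[of F G] in auto)
  also have "\<dots> = (\<Sum>\<alpha>\<in>?S. PC (Poly_Mapping.lookup F \<alpha>) * mon \<sigma> \<alpha>) + (\<Sum>\<alpha>\<in>?S. PC (Poly_Mapping.lookup G \<alpha>) * mon \<sigma> \<alpha>)"
    by (simp add: lookup_add PC_add distrib_right sum.distrib)
  also have "\<dots> = subst \<sigma> F + subst \<sigma> G"
    by (subst (1 2) subst_superset[where S="?S"]) auto
  finally show ?thesis .
qed

lemma subst_0[simp]: "subst \<sigma> 0 = 0" by (simp add: subst_def)

lemma subst_uminus: "subst \<sigma> (- F) = - subst \<sigma> F"
  using subst_add[of \<sigma> F "-F"] by (simp add: eq_neg_iff_add_eq_0 add.commute)

lemma subst_diff: "subst \<sigma> (F - G) = subst \<sigma> F - subst \<sigma> G"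
  using subst_add[of \<sigma> F "-G"] by (simp add: subst_uminus)

lemma subst_sum: "subst \<sigma> (sum f S) = (\<Sum>x\<in>S. subst \<sigma> (f x))"
  by (induct S rule: infinite_finite_induct) (simp_all add: subst_add)

lemma subst_single: "subst \<sigma> (Poly_Mapping.single \<alpha> c) = PC c * mon \<sigma> \<alpha>"
  by (simp add: subst_mon)

lemma subst_mult: "subst \<sigma> (F * G) = subst \<sigma> F * subst \<sigma> G"
proof -
  have "F * G = (\<Sum>\<alpha>\<in>Poly_Mapping.keys F. Poly_Mapping.single \<alpha> (Poly_Mapping.lookup F \<alpha>)) *
                (\<Sum>\<beta>\<in>Poly_Mapping.keys G. Poly_Mapping.single \<beta> (Poly_Mapping.lookup G \<beta>))"
    by (subst (1) poly_expand, subst (2) poly_expand) (rule refl)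
  also have "\<dots> = (\<Sum>\<alpha>\<in>Poly_Mapping.keys F. \<Sum>\<beta>\<in>Poly_Mapping.keys G.
       Poly_Mapping.single (\<alpha>+\<beta>) (Poly_Mapping.lookup F \<alpha> * Poly_Mapping.lookup G \<beta>))"
    by (simp add: sum_product mult_single)
  finally have "subst \<sigma> (F * G) = (\<Sum>\<alpha>\<in>Poly_Mapping.keys F. \<Sum>\<beta>\<in>Poly_Mapping.keys G.
       PC (Poly_Mapping.lookup F \<alpha>) * mon \<sigma> \<alpha> * (PC (Poly_Mapping.lookup G \<beta>) * mon \<sigma> \<beta>))"
    by (simp add: subst_sum subst_single mon_add PC_mult mult_ac)
  also have "\<dots> = subst \<sigma> F * subst \<sigma> G"
    by (simp add: subst_mon sum_product)
  finally show ?thesis .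
qed

lemma subst_PC[simp]: "subst \<sigma> (PC c) = PC c"
  by (simp add: PC_def subst_single)

lemma subst_1[simp]: "subst \<sigma> 1 = 1"
  using subst_PC[of \<sigma> 1] by simp

lemma subst_PV[simp]: "subst \<sigma> (PV v) = \<sigma> v"
proof -
  have "Poly_Mapping.single v (1::nat) \<noteq> 0"
    by (metis lookup_single_eq lookup_zero one_neq_zero)
  then show ?thesis by (simp add: PV_def subst_single mon_def)
qed

lemma subst_pow: "subst \<sigma> (F ^ n) = subst \<sigma> F ^ n"
  by (induct n) (simp_all add: subst_mult)

lemma subst_prod: "subst \<sigma> (prod f S) = (\<Prod>x\<in>S. subst \<sigma> (f x))"
  by (induct S rule: infinite_finite_induct) (simp_all add: subst_mult)

lemma subst_cong: "(\<And>v. v \<in> vars F \<Longrightarrow> \<sigma> v = \<tau> v) \<Longrightarrow> subst \<sigma> F = subst \<tau> F"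
  unfolding subst_def by (intro sum.cong refl arg_cong2[where f="(*)"] prod.cong arg_cong2[where f="(^)"]) (auto simp: vars_def)

lemma single_prod: "(\<Prod>v\<in>S. Poly_Mapping.single (f v) (1::complex)) = Poly_Mapping.single (sum f S) 1"
  by (induct S rule: infinite_finite_induct) (simp_all add: mult_single add.commute)

lemma sum_single_keys: "(\<Sum>v\<in>Poly_Mapping.keys \<alpha>. Poly_Mapping.single v (Poly_Mapping.lookup \<alpha> v)) = (\<alpha>::var\<Rightarrow>\<^sub>0nat)"
proof (rule poly_mapping_eqI)
  fix w
  show "Poly_Mapping.lookup (\<Sum>v\<in>Poly_Mapping.keys \<alpha>. Poly_Mapping.single v (Poly_Mapping.lookup \<alpha> v)) w = Poly_Mapping.lookup \<alpha> w"
    by (cases "w \<in> Poly_Mapping.keys \<alpha>") (auto simp: lookup_sum lookup_single when_def in_keys_iff)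
qed

lemma subst_PV_id: "subst PV F = F"
proof -
  have "mon PV \<alpha> = Poly_Mapping.single \<alpha> 1" for \<alpha>
    by (simp add: mon_def PV_pow single_prod sum_single_keys)
  then have "subst PV F = (\<Sum>\<alpha>\<in>Poly_Mapping.keys F. Poly_Mapping.single \<alpha> (Poly_Mapping.lookup F \<alpha>))"
    by (simp add: subst_mon PC_def mult_single)
  then show ?thesis using poly_expand[of F] by simp
qed

lemma subst_fix: "(\<And>v. v \<in> vars F \<Longrightarrow> \<sigma> v = PV v) \<Longrightarrow> subst \<sigma> F = F"
  using subst_cong[of F \<sigma> PV] subst_PV_id by simp

lemma vars_subst: "vars (subst \<sigma> F) \<subseteq> (\<Union>v\<in>vars F. vars (\<sigma> v))"
proof -
  have "vars (subst \<sigma> F) \<subseteq> (\<Union>\<alpha>\<in>Poly_Mapping.keys F. vars (PC (Poly_Mapping.lookup F \<alpha>) * mon \<sigma> \<alpha>))"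
    unfolding subst_mon by (rule vars_sum)
  also have "\<dots> \<subseteq> (\<Union>v\<in>vars F. vars (\<sigma> v))"
  proof (intro UN_least)
    fix \<alpha> assume a: "\<alpha> \<in> Poly_Mapping.keys F"
    have "vars (PC (Poly_Mapping.lookup F \<alpha>) * mon \<sigma> \<alpha>) \<subseteq> vars (mon \<sigma> \<alpha>)"
      using vars_mult[of "PC (Poly_Mapping.lookup F \<alpha>)" "mon \<sigma> \<alpha>"] by simp
    also have "\<dots> \<subseteq> (\<Union>v\<in>Poly_Mapping.keys \<alpha>. vars (\<sigma> v ^ Poly_Mapping.lookup \<alpha> v))"
      unfolding mon_def by (rule vars_prod)
    also have "\<dots> \<subseteq> (\<Union>v\<in>vars F. vars (\<sigma> v))"
      using keys_sub_vars[OF a] vars_pow by blast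
    finally show "vars (PC (Poly_Mapping.lookup F \<alpha>) * mon \<sigma> \<alpha>) \<subseteq> (\<Union>v\<in>vars F. vars (\<sigma> v))" .
  qed
  finally show ?thesis .
qed

section \<open>Homogeneity\<close>

definition wt :: "var \<Rightarrow> nat" where "wt v = (case v of Z _ \<Rightarrow> 0 | Xi _ \<Rightarrow> 1)"

lemma xi_deg_wt: "xi_deg \<alpha> = (\<Sum>v\<in>Poly_Mapping.keys \<alpha>. wt v * Poly_Mapping.lookup \<alpha> v)"
  unfolding xi_deg_def wt_def by (rule sum.cong) (auto split: var.splits)

lemma xi_deg_superset: "finite S \<Longrightarrow> Poly_Mapping.keys \<alpha> \<subseteq> S \<Longrightarrow>
   xi_deg \<alpha> = (\<Sum>v\<in>S. wt v * Poly_Mapping.lookup \<alpha> v)"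
  unfolding xi_deg_wt by (rule sum.mono_neutral_left) (auto simp: in_keys_iff)

lemma xi_deg_add: "xi_deg (\<alpha> + \<beta>) = xi_deg \<alpha> + xi_deg \<beta>"
proof -
  let ?S = "Poly_Mapping.keys \<alpha> \<union> Poly_Mapping.keys \<beta>"
  show ?thesis
    by (subst (1 2 3) xi_deg_superset[where S="?S"])
       (auto simp: keys_plus_nat lookup_add distrib_left sum.distrib)
qed

lemma homog_0[simp]: "xi_homog d 0" by (simp add: xi_homog_def)
lemma homog_PC: "xi_homog 0 (PC c)"
  by (simp add: xi_homog_def PC_def xi_deg_def)
lemma homog_PV: "xi_homog (wt v) (PV v)"
proof -
  have "Poly_Mapping.single v (1::nat) \<noteq> 0"
    by (metis lookup_single_eq lookup_zero one_neq_zero)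
  then show ?thesis by (simp add: xi_homog_def PV_def xi_deg_wt)
qed
lemma homog_add: "xi_homog d F \<Longrightarrow> xi_homog d G \<Longrightarrow> xi_homog d (F + G)"
  using keys_add[of F G] by (auto simp: xi_homog_def)
lemma homog_uminus: "xi_homog d F \<Longrightarrow> xi_homog d (- F)"
  by (simp add: xi_homog_def keys_def lookup_uminus)
lemma homog_diff: "xi_homog d F \<Longrightarrow> xi_homog d G \<Longrightarrow> xi_homog d (F - G)"
  using homog_add[of d F "-G"] homog_uminus[of d G] by simp
lemma homog_mult: "xi_homog a F \<Longrightarrow> xi_homog b G \<Longrightarrow> xi_homog (a + b) (F * G)"
  using keys_mult[of F G] by (force simp: xi_homog_def xi_deg_add)
lemma homog_pow: "xi_homog a F \<Longrightarrow> xi_homog (n * a) (F ^ n)"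
proof (induct n)
  case 0 then show ?case using homog_PC[of 1] by simp
next
  case (Suc n) then show ?case using homog_mult[of a F "n*a" "F^n"] by (simp add: add.commute)
qed
lemma homog_sum: "(\<And>x. x \<in> S \<Longrightarrow> xi_homog d (f x)) \<Longrightarrow> xi_homog d (sum f S)"
  by (induct S rule: infinite_finite_induct) (simp_all add: homog_add)
lemma homog_prod: "(\<And>x. x \<in> S \<Longrightarrow> xi_homog (d x) (f x)) \<Longrightarrow> xi_homog (sum d S) (prod f S)"
proof (induct S rule: infinite_finite_induct)
  case (infinite A) then show ?case using homog_PC[of 1] by simp
next
  case empty then show ?case using homog_PC[of 1] by simp
next
  case (insert x F) then show ?case using homog_mult by simp
qed

lemma homog_subst:
  assumes "xi_homog d F" and "\<And>v. v \<in> vars F \<Longrightarrow> xi_homog (wt v) (\<sigma> v)"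
  shows "xi_homog d (subst \<sigma> F)"
  unfolding subst_mon
proof (rule homog_sum)
  fix \<alpha> assume a: "\<alpha> \<in> Poly_Mapping.keys F"
  have "xi_homog (\<Sum>v\<in>Poly_Mapping.keys \<alpha>. Poly_Mapping.lookup \<alpha> v * wt v) (mon \<sigma> \<alpha>)"
    unfolding mon_def
    by (rule homog_prod, rule homog_pow, rule assms(2)) (use keys_sub_vars[OF a] in auto)
  moreover have "(\<Sum>v\<in>Poly_Mapping.keys \<alpha>. Poly_Mapping.lookup \<alpha> v * wt v) = d"
    using assms(1) a by (simp add: xi_homog_def xi_deg_wt mult.commute)
  ultimately show "xi_homog d (PC (Poly_Mapping.lookup F \<alpha>) * mon \<sigma> \<alpha>)"
    using homog_mult[OF homog_PC] by fastforce
qed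

section \<open>Roots of unity\<close>

lemma zeta_pow: "zeta p ^ d = cis (2 * pi * real d / real p)"
  by (simp add: zeta_def DeMoivre mult.commute)

lemma zeta_pow_p: "1 \<le> p \<Longrightarrow> zeta p ^ p = 1"
  by (simp add: zeta_pow)

lemma mu_pow_p: "1 \<le> p \<Longrightarrow> c \<in> mu p \<Longrightarrow> c ^ p = 1"
  by (auto simp: mu_def power_mult[symmetric] mult.commute[of _ p] power_mult zeta_pow_p)

lemma zeta_mem_mu: "j < p \<Longrightarrow> zeta p ^ j \<in> mu p"
  by (auto simp: mu_def)

lemma zeta_pow_eq1: assumes "1 \<le> p" "zeta p ^ d = 1" shows "p dvd d"
proof -
  have "cos (2 * pi * real d / real p) = 1"
    using assms(2) unfolding zeta_pow by (metis Re_complex_of_real complex_of_real_def cis.sel(1) one_complex.sel(1))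
  then obtain n :: int where n: "2 * pi * real d / real p = real_of_int n * (2 * pi)"
    using cos_one_2pi_int by (metis mult.assoc)
  then have "real d = real_of_int n * real p" using assms(1)
    by (simp add: field_simps)
  then have "int d = n * int p" by (metis of_int_eq_iff of_int_mult of_int_of_nat_eq)
  then show ?thesis by (metis dvd_triv_right int_dvd_int_iff)
qed

lemma root_sum: assumes "1 \<le> p"
  shows "(\<Sum>j<p. (zeta p ^ d) ^ j) = (if p dvd d then of_nat p else 0)"
proof (cases "p dvd d")
  case True
  then obtain q where "d = p * q" by blast
  then have "zeta p ^ d = 1" using zeta_pow_p[OF assms] by (simp add: power_mult)
  then show ?thesis using True by simp
next
  case False
  then have ne: "zeta p ^ d \<noteq> 1" using zeta_pow_eq1[OF assms] by blast
  have "(zeta p ^ d) ^ p = 1" using zeta_pow_p[OF assms]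
    by (metis mult.commute power_mult power_one)
  then show ?thesis using False ne by (simp add: sum_gp_strict)
qed

lemma fourier:
  fixes B :: "nat \<Rightarrow> mpoly"
  assumes p: "1 \<le> p" and H: "\<And>c. c \<in> mu p \<Longrightarrow> (\<Sum>r<p. PC (c ^ r) * B r) = 0"
    and s: "s < p"
  shows "B s = 0"
proof -
  let ?z = "zeta p"
  have "0 = (\<Sum>j<p. PC (?z ^ (j * (p - s))) * (\<Sum>r<p. PC ((?z ^ j) ^ r) * B r))"
    using H zeta_mem_mu by simp
  also have "\<dots> = (\<Sum>j<p. \<Sum>r<p. PC ((?z ^ (p - s + r)) ^ j) * B r)"
  proof (rule sum.cong[OF refl])
    fix j
    have e: "PC (?z ^ (j * (p - s))) * (PC ((?z ^ j) ^ r) * B r) = PC ((?z ^ (p - s + r)) ^ j) * B r" for r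
    proof -
      have "?z ^ (j * (p - s)) * (?z ^ j) ^ r = (?z ^ (p - s + r)) ^ j"
        by (simp add: power_mult[symmetric] power_add[symmetric] add_mult_distrib2 mult.commute add.commute)
      then show ?thesis by (simp add: mult.assoc[symmetric] PC_mult[symmetric])
    qed
    show "PC (?z ^ (j * (p - s))) * (\<Sum>r<p. PC ((?z ^ j) ^ r) * B r) = (\<Sum>r<p. PC ((?z ^ (p - s + r)) ^ j) * B r)"
      by (simp add: sum_distrib_left e)
  qed
  also have "\<dots> = (\<Sum>r<p. PC (\<Sum>j<p. (?z ^ (p - s + r)) ^ j) * B r)"
    by (subst sum.swap) (simp add: PC_sum sum_distrib_right)
  also have "\<dots> = (\<Sum>r<p. PC (if r = s then of_nat p else 0) * B r)"
  proof (rule sum.cong[OF refl])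
    fix r assume r: "r \<in> {..<p}"
    have "p dvd (p - s + r) \<longleftrightarrow> r = s"
    proof
      assume "p dvd (p - s + r)"
      then obtain q where q: "p - s + r = p * q" by blast
      have "0 < p - s + r" "p - s + r < 2 * p" using r s by auto
      then have q0: "q \<noteq> 0" using q by (metis mult_0_right less_irrefl)
      have q2: "q < 2"
      proof (rule ccontr)
        assume "\<not> q < 2"
        then have "p * 2 \<le> p * q" by simp
        then show False using q \<open>p - s + r < 2 * p\<close> by linarith
      qed
      from q0 q2 have "q = 1" by linarith
      then show "r = s" using q s by simp
    qed (use s in simp)
    then show "PC (\<Sum>j<p. (?z ^ (p - s + r)) ^ j) * B r = PC (if r = s then of_nat p else 0) * B r"
      by (simp add: root_sum[OF p])
  qed
  also have "\<dots> = PC (of_nat p) * B s"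
  proof -
    have "(\<Sum>r<p. PC (if r = s then of_nat p else 0) * B r) = (\<Sum>r<p. if r = s then PC (of_nat p) * B r else 0)"
      by (rule sum.cong) auto
    then show ?thesis using s by simp
  qed
  finally have "PC (of_nat p) * B s = 0" by simp
  then show ?thesis using p by simp
qed

section \<open>Ideals\<close>

lemma ideal_0[simp]: "in_ideal m p W k 0"
  unfolding in_ideal_def by (rule exI[of _ "\<lambda>_. 0"]) simp

lemma ideal_0_iff: "in_ideal m p W 0 X \<longleftrightarrow> X = 0"
  unfolding in_ideal_def by (auto intro: exI[of _ "\<lambda>_. 0"])

lemma ideal_add: "in_ideal m p W k X \<Longrightarrow> in_ideal m p W k Y \<Longrightarrow> in_ideal m p W k (X + Y)"
  unfolding in_ideal_def
proof (elim exE conjE)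
  fix c d assume "\<forall>i. vars (c i) \<subseteq> W" "X = (\<Sum>i = 1..k. c i * Mgen m p i)"
    "\<forall>i. vars (d i) \<subseteq> W" "Y = (\<Sum>i = 1..k. d i * Mgen m p i)"
  then show "\<exists>c. (\<forall>i. vars (c i) \<subseteq> W) \<and> X + Y = (\<Sum>i = 1..k. c i * Mgen m p i)"
  proof (intro exI[of _ "\<lambda>i. c i + d i"] conjI allI)
    fix i show "vars (c i + d i) \<subseteq> W" using vars_add[of "c i" "d i"] \<open>\<forall>i. vars (c i) \<subseteq> W\<close> \<open>\<forall>i. vars (d i) \<subseteq> W\<close> by blast
  qed (simp add: \<open>X = _\<close> \<open>Y = _\<close> distrib_right sum.distrib)
qed

lemma ideal_mult: "vars H \<subseteq> W \<Longrightarrow> in_ideal m p W k X \<Longrightarrow> in_ideal m p W k (H * X)"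
  unfolding in_ideal_def
proof (elim exE conjE)
  fix c assume "vars H \<subseteq> W" "\<forall>i. vars (c i) \<subseteq> W" "X = (\<Sum>i = 1..k. c i * Mgen m p i)"
  then show "\<exists>c. (\<forall>i. vars (c i) \<subseteq> W) \<and> H * X = (\<Sum>i = 1..k. c i * Mgen m p i)"
  proof (intro exI[of _ "\<lambda>i. H * c i"] conjI allI)
    fix i show "vars (H * c i) \<subseteq> W" using vars_mult[of H "c i"] \<open>\<forall>i. vars (c i) \<subseteq> W\<close> \<open>vars H \<subseteq> W\<close> by blast
  qed (simp add: \<open>X = _\<close> sum_distrib_left mult.assoc)
qed

lemma ideal_sum: "(\<And>x. x \<in> S \<Longrightarrow> in_ideal m p W k (f x)) \<Longrightarrow> in_ideal m p W k (sum f S)"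
  by (induct S rule: infinite_finite_induct) (simp_all add: ideal_add)

lemma ideal_Suc: "in_ideal m p W k X \<Longrightarrow> in_ideal m p W (Suc k) X"
  unfolding in_ideal_def
proof (elim exE conjE)
  fix c assume "\<forall>i. vars (c i) \<subseteq> W" "X = (\<Sum>i = 1..k. c i * Mgen m p i)"
  then show "\<exists>c. (\<forall>i. vars (c i) \<subseteq> W) \<and> X = (\<Sum>i = 1..Suc k. c i * Mgen m p i)"
    by (intro exI[of _ "c(Suc k := 0)"]) (auto intro: sum.cong)
qed

lemma ideal_gen: "1 \<le> i \<Longrightarrow> i \<le> k \<Longrightarrow> in_ideal m p W k (Mgen m p i)"
  unfolding in_ideal_def
proof (intro exI[of _ "\<lambda>j. if j = i then 1 else 0"] conjI)
  assume "1 \<le> i" "i \<le> k"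
  then show "Mgen m p i = (\<Sum>j = 1..k. (if j = i then 1 else 0) * Mgen m p j)"
    by (simp add: if_distrib[of "\<lambda>x. x * _"] cong: if_cong)
qed auto

section \<open>Division by x^p - y^p\<close>

definition divrep :: "nat \<Rightarrow> var set \<Rightarrow> var \<Rightarrow> var \<Rightarrow> mpoly \<Rightarrow> bool" where
  "divrep p W x y X \<longleftrightarrow> (\<exists>Xs Q. (\<forall>r. vars (Xs r) \<subseteq> W \<and> x \<notin> vars (Xs r)) \<and> vars Q \<subseteq> W \<and>
      X = (\<Sum>r<p. Xs r * PV x ^ r) + (PV x ^ p - PV y ^ p) * Q)"

lemma divrep_add: "divrep p W x y X \<Longrightarrow> divrep p W x y Y \<Longrightarrow> divrep p W x y (X + Y)"
  unfolding divrep_def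
proof (elim exE conjE)
  fix Xs Q Ys R
  assume a: "\<forall>r. vars (Xs r) \<subseteq> W \<and> x \<notin> vars (Xs r)" "vars Q \<subseteq> W"
     "X = (\<Sum>r<p. Xs r * PV x ^ r) + (PV x ^ p - PV y ^ p) * Q"
     "\<forall>r. vars (Ys r) \<subseteq> W \<and> x \<notin> vars (Ys r)" "vars R \<subseteq> W"
     "Y = (\<Sum>r<p. Ys r * PV x ^ r) + (PV x ^ p - PV y ^ p) * R"
  show "\<exists>Xs Q. (\<forall>r. vars (Xs r) \<subseteq> W \<and> x \<notin> vars (Xs r)) \<and> vars Q \<subseteq> W \<and>
      X + Y = (\<Sum>r<p. Xs r * PV x ^ r) + (PV x ^ p - PV y ^ p) * Q"
  proof (intro exI[of _ "\<lambda>r. Xs r + Ys r"] exI[of _ "Q + R"] conjI allI)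
    fix r show "vars (Xs r + Ys r) \<subseteq> W" "x \<notin> vars (Xs r + Ys r)"
      using a vars_add[of "Xs r" "Ys r"] by blast+
  next
    show "vars (Q + R) \<subseteq> W" using a vars_add[of Q R] by blast
  next
    show "X + Y = (\<Sum>r<p. (Xs r + Ys r) * PV x ^ r) + (PV x ^ p - PV y ^ p) * (Q + R)"
      by (subst a(3), subst a(6)) (simp add: distrib_right distrib_left sum.distrib algebra_simps)
  qed
qed

lemma divrep_sum: "(\<And>a. a \<in> S \<Longrightarrow> divrep p W x y (f a)) \<Longrightarrow> divrep p W x y (sum f S)"
proof (induct S rule: infinite_finite_induct)
  case (infinite A)
  then show ?case unfolding divrep_def by (intro exI[of _ "\<lambda>_. 0"] exI[of _ 0]) simp
next
  case empty
  then show ?case unfolding divrep_def by (intro exI[of _ "\<lambda>_. 0"] exI[of _ 0]) simp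
next
  case (insert a F)
  then show ?case by (simp add: divrep_add)
qed

lemma divrep_mono:
  assumes p: "1 \<le> p" and xy: "x \<noteq> y" "x \<in> W" "y \<in> W"
    and A: "vars A \<subseteq> W" "x \<notin> vars A"
  shows "divrep p W x y (A * PV x ^ e)"
proof -
  define q r where "q = e div p" and "r = e mod p"
  have r: "r < p" using p by (simp add: r_def)
  have e: "e = r + p * q" by (simp add: q_def r_def)
  define a b where "a = PV x ^ p" and "b = PV y ^ p"
  define S where "S = (\<Sum>i<q. b ^ (q - Suc i) * a ^ i)"
  have aq: "a ^ q = b ^ q + (a - b) * S"
    using power_diff_sumr2[of a q b] unfolding S_def by (metis diff_eq_eq add.commute)
  have vS: "vars S \<subseteq> W"
  proof -
    have "vars S \<subseteq> (\<Union>i\<in>{..<q}. vars (b ^ (q - Suc i) * a ^ i))" unfolding S_def by (rule vars_sum)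
    also have "\<dots> \<subseteq> W"
    proof (intro UN_least)
      fix i
      have "vars (b ^ (q - Suc i) * a ^ i) \<subseteq> vars b \<union> vars a"
        using vars_mult[of "b ^ (q - Suc i)" "a ^ i"] vars_pow[of b] vars_pow[of a] by blast
      also have "\<dots> \<subseteq> W" using xy vars_pow[of "PV x" p] vars_pow[of "PV y" p] by (auto simp: a_def b_def)
      finally show "vars (b ^ (q - Suc i) * a ^ i) \<subseteq> W" .
    qed
    finally show ?thesis .
  qed
  have eq: "A * PV x ^ e = (A * b ^ q) * PV x ^ r + (a - b) * (A * PV x ^ r * S)"
  proof -
    have "A * PV x ^ e = A * PV x ^ r * a ^ q"
      by (simp add: e power_add power_mult a_def)
    also have "\<dots> = (A * b ^ q) * PV x ^ r + (a - b) * (A * PV x ^ r * S)"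
      by (simp add: aq algebra_simps)
    finally show ?thesis .
  qed
  show ?thesis unfolding divrep_def
  proof (intro exI[of _ "\<lambda>t. if t = r then A * b ^ q else 0"] exI[of _ "A * PV x ^ r * S"] conjI allI)
    fix t
    have vb: "vars (A * b ^ q) \<subseteq> vars A \<union> {y}"
      using vars_mult[of A "b^q"] vars_pow[of b q] vars_pow[of "PV y" p] by (auto simp: b_def)
    show "vars (if t = r then A * b ^ q else 0) \<subseteq> W" "x \<notin> vars (if t = r then A * b ^ q else 0)"
      using vb A xy by auto
  next
    show "vars (A * PV x ^ r * S) \<subseteq> W"
      using vars_mult[of "A * PV x ^ r" S] vars_mult[of A "PV x ^ r"] vars_pow[of "PV x" r] A xy vS by fastforce
  next
    have "(\<Sum>t<p. (if t = r then A * b ^ q else 0) * PV x ^ t) = (\<Sum>t<p. if t = r then A * b ^ q * PV x ^ t else 0)"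
      by (rule sum.cong) auto
    also have "\<dots> = A * b ^ q * PV x ^ r" using r by simp
    finally show "A * PV x ^ e = (\<Sum>t<p. (if t = r then A * b ^ q else 0) * PV x ^ t) + (PV x ^ p - PV y ^ p) * (A * PV x ^ r * S)"
      using eq by (simp add: a_def b_def)
  qed
qed

lemma divrep_all:
  assumes p: "1 \<le> p" and xy: "x \<noteq> y" "x \<in> W" "y \<in> W" and X: "vars X \<subseteq> W"
  shows "divrep p W x y X"
proof -
  have "divrep p W x y (Poly_Mapping.single \<alpha> (Poly_Mapping.lookup X \<alpha>))" if a: "\<alpha> \<in> Poly_Mapping.keys X" for \<alpha>
  proof -
    define \<alpha>' where "\<alpha>' = Poly_Mapping.update x 0 \<alpha>"
    have \<alpha>: "\<alpha> = \<alpha>' + Poly_Mapping.single x (Poly_Mapping.lookup \<alpha> x)"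
      by (rule poly_mapping_eqI) (simp add: \<alpha>'_def lookup_add lookup_update lookup_single when_def)
    have k': "Poly_Mapping.keys \<alpha>' \<subseteq> Poly_Mapping.keys \<alpha> - {x}"
      by (auto simp: \<alpha>'_def keys_update)
    let ?A = "Poly_Mapping.single \<alpha>' (Poly_Mapping.lookup X \<alpha>)"
    have "Poly_Mapping.single \<alpha> (Poly_Mapping.lookup X \<alpha>) = ?A * PV x ^ Poly_Mapping.lookup \<alpha> x"
      by (subst (1) \<alpha>) (simp add: PV_pow mult_single)
    moreover have "vars ?A \<subseteq> W" "x \<notin> vars ?A"
      using vars_single[of \<alpha>' "Poly_Mapping.lookup X \<alpha>"] k' keys_sub_vars[OF a] X by auto
    ultimately show ?thesis using divrep_mono[OF p xy] by simp
  qed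
  then have "divrep p W x y (\<Sum>\<alpha>\<in>Poly_Mapping.keys X. Poly_Mapping.single \<alpha> (Poly_Mapping.lookup X \<alpha>))"
    by (rule divrep_sum)
  then show ?thesis using poly_expand[of X] by simp
qed

definition sig :: "nat \<Rightarrow> nat \<Rightarrow> (nat \<Rightarrow> complex) \<Rightarrow> var \<Rightarrow> mpoly" where
  "sig m k \<chi> = (\<lambda>v. case v of
        Xi i \<Rightarrow> (if 1 \<le> i \<and> i \<le> k then PC (\<chi> i) * PV (Xi m) else PV v)
      | Z j \<Rightarrow> PV v)"

lemma psi_sig: "psi m k \<chi> F = subst (sig m k \<chi>) F"
  by (simp add: psi_def sig_def)

lemma sig_0: "sig m 0 \<chi> = PV"
  by (rule ext) (auto simp: sig_def split: var.splits)

lemma psi_Mgen_zero: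
  assumes p: "1 \<le> p" and k: "k < m" and i: "1 \<le> i" "i \<le> k" and chi: "\<chi> \<in> PiE {1..k} (\<lambda>_. mu p)"
  shows "psi m k \<chi> (Mgen m p i) = 0"
proof -
  have "\<chi> i \<in> mu p" using chi i by auto
  then have c: "\<chi> i ^ p = 1" using mu_pow_p[OF p] by blast
  show ?thesis using i k
    by (simp add: psi_sig Mgen_def subst_diff subst_pow sig_def power_mult_distrib PC_pow[symmetric] c)
qed

lemma ideal_kills:
  assumes p: "1 \<le> p" and k: "k < m" and chi: "\<chi> \<in> PiE {1..k} (\<lambda>_. mu p)"
    and X: "in_ideal m p W k X"
  shows "psi m k \<chi> X = 0"
proof -
  obtain c where "X = (\<Sum>i = 1..k. c i * Mgen m p i)" using X by (auto simp: in_ideal_def)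
  then show ?thesis
    using psi_Mgen_zero[OF p k _ _ chi] by (simp add: psi_sig subst_sum subst_mult)
qed

lemma vars_Rpoly: "vars (Rpoly m p) \<subseteq> {Z j | j. 1 \<le> j \<and> j \<le> m}"
proof -
  have "vars (1 - (\<Sum>j=1..m. PC (zeta p ^ i j) * PV (Z j))) \<subseteq> {Z j | j. 1 \<le> j \<and> j \<le> m}" for i
  proof -
    have "vars (\<Sum>j=1..m. PC (zeta p ^ i j) * PV (Z j)) \<subseteq> (\<Union>j\<in>{1..m}. vars (PC (zeta p ^ i j) * PV (Z j)))"
      by (rule vars_sum)
    also have "\<dots> \<subseteq> {Z j | j. 1 \<le> j \<and> j \<le> m}"
      using vars_mult[of "PC _" "PV _"] by fastforce
    finally show ?thesis using vars_diff[of 1] by fastforce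
  qed
  then show ?thesis unfolding Rpoly_def by (intro order_trans[OF vars_prod] UN_least) blast
qed

lemma vars_Den: "vars (Den m p) \<subseteq> {Z j | j. 1 \<le> j \<and> j \<le> m}"
proof -
  have "vars (\<Prod>j=1..m. PV (Z j)) \<subseteq> {Z j | j. 1 \<le> j \<and> j \<le> m}"
    using vars_prod[of "\<lambda>j. PV (Z j)" "{1..m}"] by auto
  then show ?thesis unfolding Den_def using vars_mult vars_Rpoly by blast
qed

lemma vars_Den_pow: "vars (Den m p ^ n) \<subseteq> {Z j | j. 1 \<le> j \<and> j \<le> m}"
  using vars_pow vars_Den by blast

lemma psi_Den: "subst (sig m k \<chi>) (Den m p) = Den m p"
  by (rule subst_fix) (use vars_Den in \<open>force simp: sig_def\<close>)

lemma Den_ne0: "Den m p \<noteq> 0"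
proof -
  have "Rpoly m p \<noteq> 0"
  proof -
    have "Poly_Mapping.lookup (1 - (\<Sum>j=1..m. PC (zeta p ^ i j) * PV (Z j))) 0 = 1" for i
      by (simp add: lookup_minus lookup_sum lookup_PC_PV0)
    then have "1 - (\<Sum>j=1..m. PC (zeta p ^ i j) * PV (Z j)) \<noteq> 0" for i
      by (metis lookup_zero zero_neq_one)
    moreover have "finite (PiE {1..m} (\<lambda>_. {1..p::nat}))" by (simp add: finite_PiE)
    ultimately show ?thesis unfolding Rpoly_def by (subst prod_zero_iff) auto
  qed
  then show ?thesis unfolding Den_def by (simp add: prod_zero_iff)
qed

lemma core:
  assumes p: "1 \<le> p"
  shows "k < m \<Longrightarrow> Xi m \<in> W \<Longrightarrow> (\<forall>i. 1 \<le> i \<and> i \<le> k \<longrightarrow> Xi i \<in> W) \<Longrightarrow> vars X \<subseteq> W \<Longrightarrow>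
    (\<forall>\<chi>\<in>PiE {1..k} (\<lambda>_. mu p). psi m k \<chi> X = 0) \<Longrightarrow> in_ideal m p W k X"
proof (induct k arbitrary: X)
  case 0
  have "(\<lambda>_. undefined) \<in> PiE {1..0::nat} (\<lambda>_. mu p)" by simp
  then have "psi m 0 (\<lambda>_. undefined) X = 0" using 0 by blast
  then have "X = 0" by (simp add: psi_sig sig_0 subst_PV_id)
  then show ?case by simp
next
  case (Suc k)
  let ?x = "Xi (Suc k)" and ?y = "Xi m"
  have xy: "?x \<noteq> ?y" "?x \<in> W" "?y \<in> W" using Suc.prems by auto
  obtain Xs Q where XsQ: "\<forall>r. vars (Xs r) \<subseteq> W \<and> ?x \<notin> vars (Xs r)" "vars Q \<subseteq> W"
    "X = (\<Sum>r<p. Xs r * PV ?x ^ r) + (PV ?x ^ p - PV ?y ^ p) * Q"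
    using divrep_all[OF p xy Suc.prems(4)] unfolding divrep_def by blast
  have M: "Mgen m p (Suc k) = PV ?x ^ p - PV ?y ^ p" using Suc.prems by (simp add: Mgen_def)
  have Xsr: "in_ideal m p W k (Xs r)" if r: "r < p" for r
  proof (rule Suc.hyps)
    show "k < m" "Xi m \<in> W" "\<forall>i. 1 \<le> i \<and> i \<le> k \<longrightarrow> Xi i \<in> W" "vars (Xs r) \<subseteq> W"
      using Suc.prems XsQ by auto
    show "\<forall>\<chi>\<in>PiE {1..k} (\<lambda>_. mu p). psi m k \<chi> (Xs r) = 0"
    proof
      fix \<chi>' assume chi': "\<chi>' \<in> PiE {1..k} (\<lambda>_. mu p)"
      define B where "B t = psi m k \<chi>' (Xs t) * PV ?y ^ t" for t
      have "(\<Sum>t<p. PC (c ^ t) * B t) = 0" if c: "c \<in> mu p" for c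
      proof -
        define \<chi> where "\<chi> = \<chi>'(Suc k := c)"
        have chi: "\<chi> \<in> PiE {1..Suc k} (\<lambda>_. mu p)"
          using chi' c by (auto simp: \<chi>_def PiE_def extensional_def Pi_def)
        have cp: "c ^ p = 1" using mu_pow_p[OF p c] .
        have sx: "sig m (Suc k) \<chi> ?x = PC c * PV ?y" by (simp add: sig_def \<chi>_def)
        have sy: "sig m (Suc k) \<chi> ?y = PV ?y" using Suc.prems by (simp add: sig_def)
        have sXs: "subst (sig m (Suc k) \<chi>) (Xs t) = psi m k \<chi>' (Xs t)" for t
          unfolding psi_sig
        proof (rule subst_cong)
          fix v assume "v \<in> vars (Xs t)"
          then have "v \<noteq> ?x" using XsQ by auto
          then show "sig m (Suc k) \<chi> v = sig m k \<chi>' v"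
            by (cases v) (auto simp: sig_def \<chi>_def)
        qed
        have "0 = psi m (Suc k) \<chi> X" using Suc.prems(5) chi by simp
        also have "\<dots> = (\<Sum>t<p. psi m k \<chi>' (Xs t) * (PC c * PV ?y) ^ t)
             + ((PC c * PV ?y) ^ p - PV ?y ^ p) * subst (sig m (Suc k) \<chi>) Q"
          by (subst XsQ(3)) (simp add: psi_sig subst_add subst_sum subst_mult subst_pow subst_diff sXs sx sy)
        also have "\<dots> = (\<Sum>t<p. PC (c ^ t) * B t)"
          by (simp add: B_def power_mult_distrib PC_pow[symmetric] cp mult_ac)
        finally show ?thesis by simp
      qed
      then have "B r = 0" using fourier[OF p _ r] by blast
      then show "psi m k \<chi>' (Xs r) = 0" by (simp add: B_def)
    qed
  qed
  have "in_ideal m p W (Suc k) (\<Sum>r<p. Xs r * PV ?x ^ r)"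
  proof (rule ideal_sum)
    fix r assume "r \<in> {..<p}"
    then have "in_ideal m p W (Suc k) (PV ?x ^ r * Xs r)"
      using ideal_mult[OF _ ideal_Suc[OF Xsr]] vars_pow[of "PV ?x" r] xy by auto
    then show "in_ideal m p W (Suc k) (Xs r * PV ?x ^ r)" by (simp add: mult.commute)
  qed
  moreover have "in_ideal m p W (Suc k) ((PV ?x ^ p - PV ?y ^ p) * Q)"
    using ideal_mult[OF XsQ(2) ideal_gen[of "Suc k" "Suc k" m p W]] M by (simp add: mult.commute)
  ultimately show ?case using XsQ(3) ideal_add by simp
qed

lemma Vk_facts:
  "Xi m \<in> Vk m k" "\<forall>i. 1 \<le> i \<and> i \<le> k \<longrightarrow> Xi i \<in> Vk m k" "vars (Den m p) \<subseteq> Vk m k"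
  using vars_Den[of m p] by (auto simp: Vk_def)

lemma Vk_m: "1 \<le> m \<Longrightarrow> Vk m (m - 1) = Vk m m"
proof -
  assume "1 \<le> m"
  have "j \<le> m \<longleftrightarrow> j \<le> m - 1 \<or> j = m" for j using \<open>1 \<le> m\<close> by linarith
  then show ?thesis unfolding Vk_def by blast
qed

lemma nzd:
  assumes p: "1 \<le> p" and k: "k < m" and W: "Xi m \<in> W" "\<forall>i. 1 \<le> i \<and> i \<le> k \<longrightarrow> Xi i \<in> W"
     "vars (Den m p) \<subseteq> W"
    and H: "\<forall>\<chi>\<in>PiE {1..k} (\<lambda>_. mu p). psi m k \<chi> H \<noteq> 0"
    and F: "vars F \<subseteq> W"
    and L: "loc_eq m p W k (H * F, n) (0, 0)"
  shows "loc_eq m p W k (F, n) (0, 0)"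
proof -
  obtain N where N: "in_ideal m p W k (Den m p ^ N * (H * F))"
    using L by (auto simp: loc_eq_def)
  have "psi m k \<chi> F = 0" if chi: "\<chi> \<in> PiE {1..k} (\<lambda>_. mu p)" for \<chi>
  proof -
    have "0 = psi m k \<chi> (Den m p ^ N * (H * F))" using ideal_kills[OF p k chi N] by simp
    also have "\<dots> = Den m p ^ N * (psi m k \<chi> H * psi m k \<chi> F)"
      by (simp add: psi_sig subst_mult subst_pow psi_Den)
    finally show ?thesis using H chi Den_ne0 by simp
  qed
  then have "in_ideal m p W k F" using core[OF p k W(1,2) F] by blast
  then show ?thesis unfolding loc_eq_def by (intro exI[of _ 0]) simp
qed

lemma psi_M_ne:
  assumes p: "1 \<le> p" and i: "1 \<le> i" "i \<le> m"
  shows "psi m (i - 1) \<chi> (Mgen m p i) \<noteq> 0"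
proof -
  define \<tau> where "\<tau> v = (if v = Xi i then PV v else 0)" for v
  have p0: "(0::mpoly) ^ p = 0" using p by simp
  have "subst \<tau> (psi m (i - 1) \<chi> (Mgen m p i)) = PV (Xi i) ^ p"
  proof (cases "i < m")
    case True
    have ii: "\<not> i \<le> i - Suc 0" using i by simp
    then show ?thesis using i True
      by (simp add: psi_sig Mgen_def subst_diff subst_pow sig_def \<tau>_def p0)
  next
    case False
    then have im: "i = m" using i by simp
    have ii: "\<not> i \<le> i - Suc 0" using i by simp
    show ?thesis using i im ii
      by (simp add: psi_sig Mgen_def subst_diff subst_pow subst_sum subst_mult sig_def \<tau>_def p0)
  qed
  then show ?thesis by (metis PV_ne0 power_not_zero subst_0)
qed

lemma quot_ne0:
  assumes p: "1 \<le> p"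
  shows "\<not> loc_eq m p W m (1, 0) (0, 0)"
proof
  assume "loc_eq m p W m (1, 0) (0, 0)"
  then obtain N c where c: "Den m p ^ N = (\<Sum>i = 1..m. c i * Mgen m p i)"
    by (auto simp: loc_eq_def in_ideal_def)
  define \<tau> where "\<tau> v = (case v of Z _ \<Rightarrow> PV v | Xi _ \<Rightarrow> 0)" for v
  have p0: "(0::mpoly) ^ p = 0" using p by simp
  have "subst \<tau> (Den m p ^ N) = Den m p ^ N"
    by (rule subst_fix) (use vars_Den_pow in \<open>force simp: \<tau>_def\<close>)
  moreover have "subst \<tau> (Mgen m p i) = 0" for i
    by (simp add: Mgen_def subst_diff subst_pow subst_sum subst_mult \<tau>_def p0)
  ultimately have "Den m p ^ N = 0" using c by (simp add: subst_sum subst_mult)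
  then show False using Den_ne0 by simp
qed

theorem mainTheorem10:
  fixes m p :: nat
  assumes "1 \<le> p" and "1 \<le> m"
  shows "(\<forall>k\<in>{1..m-1}.
            (\<forall>F n G n'. vars F \<subseteq> Vk m k \<longrightarrow> vars G \<subseteq> Vk m k \<longrightarrow>
               (loc_eq m p (Vk m k) k (F, n) (G, n') \<longleftrightarrow>
                (\<forall>\<chi>\<in>PiE {1..k} (\<lambda>_. mu p).
                   loc_eq m p (Vk m 0) 0 (psi m k \<chi> F, n) (psi m k \<chi> G, n'))))
          \<and> (\<forall>F d \<chi>. vars F \<subseteq> Vk m k \<longrightarrow> xi_homog d F \<longrightarrow> \<chi> \<in> PiE {1..k} (\<lambda>_. mu p) \<longrightarrow>
               xi_homog d (psi m k \<chi> F)))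
       \<and> xi_homog p (Mgen m p m)
       \<and> (\<forall>F n. vars F \<subseteq> Vk m (m-1) \<longrightarrow>
            loc_eq m p (Vk m (m-1)) (m-1) (Mgen m p m * F, n) (0, 0) \<longrightarrow>
            loc_eq m p (Vk m (m-1)) (m-1) (F, n) (0, 0))
       \<and> regular_sequence m p"
proof (intro conjI ballI allI impI)
  note p = assms(1)
  fix k assume k: "k \<in> {1..m-1}"
  then have km: "k < m" by auto
  {
    fix F G :: mpoly and n n' :: nat
    assume F: "vars F \<subseteq> Vk m k" and G: "vars G \<subseteq> Vk m k"
    let ?D = "Den m p"
    have hom: "psi m k \<chi> (?D ^ N * (?D ^ n' * F - ?D ^ n * G)) =
       ?D ^ N * (?D ^ n' * psi m k \<chi> F - ?D ^ n * psi m k \<chi> G)" for \<chi> N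
      by (simp add: psi_sig subst_mult subst_pow subst_diff psi_Den)
    show "loc_eq m p (Vk m k) k (F, n) (G, n') \<longleftrightarrow>
          (\<forall>\<chi>\<in>PiE {1..k} (\<lambda>_. mu p). loc_eq m p (Vk m 0) 0 (psi m k \<chi> F, n) (psi m k \<chi> G, n'))"
    proof
      assume "loc_eq m p (Vk m k) k (F, n) (G, n')"
      then obtain N where N: "in_ideal m p (Vk m k) k (?D ^ N * (?D ^ n' * F - ?D ^ n * G))"
        by (auto simp: loc_eq_def)
      show "\<forall>\<chi>\<in>PiE {1..k} (\<lambda>_. mu p). loc_eq m p (Vk m 0) 0 (psi m k \<chi> F, n) (psi m k \<chi> G, n')"
      proof
        fix \<chi> assume chi: "\<chi> \<in> PiE {1..k} (\<lambda>_. mu p)"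
        have "?D ^ N * (?D ^ n' * psi m k \<chi> F - ?D ^ n * psi m k \<chi> G) = 0"
          using ideal_kills[OF p km chi N] hom by simp
        then show "loc_eq m p (Vk m 0) 0 (psi m k \<chi> F, n) (psi m k \<chi> G, n')"
          unfolding loc_eq_def ideal_0_iff by auto
      qed
    next
      assume A: "\<forall>\<chi>\<in>PiE {1..k} (\<lambda>_. mu p). loc_eq m p (Vk m 0) 0 (psi m k \<chi> F, n) (psi m k \<chi> G, n')"
      have "psi m k \<chi> (?D ^ 0 * (?D ^ n' * F - ?D ^ n * G)) = 0" if chi: "\<chi> \<in> PiE {1..k} (\<lambda>_. mu p)" for \<chi>
      proof -
        obtain N where "?D ^ N * (?D ^ n' * psi m k \<chi> F - ?D ^ n * psi m k \<chi> G) = 0"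
          using A chi unfolding loc_eq_def ideal_0_iff by auto
        then have "?D ^ n' * psi m k \<chi> F - ?D ^ n * psi m k \<chi> G = 0" using Den_ne0 by simp
        then show ?thesis using hom[of \<chi> 0] by simp
      qed
      moreover have "vars (?D ^ 0 * (?D ^ n' * F - ?D ^ n * G)) \<subseteq> Vk m k"
      proof -
        have "vars (?D ^ n' * F) \<subseteq> Vk m k" "vars (?D ^ n * G) \<subseteq> Vk m k"
          using vars_mult[of "?D ^ n'" F] vars_mult[of "?D ^ n" G] vars_pow[of ?D] Vk_facts(3)[of m p k] F G
          by blast+
        then show ?thesis using vars_diff[of "?D ^ n' * F" "?D ^ n * G"] by auto
      qed
      ultimately have "in_ideal m p (Vk m k) k (?D ^ 0 * (?D ^ n' * F - ?D ^ n * G))"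
        using core[OF p km Vk_facts(1,2)] by blast
      then show "loc_eq m p (Vk m k) k (F, n) (G, n')"
        unfolding loc_eq_def by (intro exI[of _ 0]) simp
    qed
  }
  {
    fix F :: mpoly and d :: nat and \<chi>
    assume "vars F \<subseteq> Vk m k" "xi_homog d F" "\<chi> \<in> PiE {1..k} (\<lambda>_. mu p)"
    show "xi_homog d (psi m k \<chi> F)"
      unfolding psi_sig
    proof (rule homog_subst[OF \<open>xi_homog d F\<close>])
      fix v
      show "xi_homog (wt v) (sig m k \<chi> v)"
      proof (cases v)
        case (Z j) then show ?thesis using homog_PV[of v] by (simp add: sig_def)
      next
        case (Xi i)
        show ?thesis
        proof (cases "1 \<le> i \<and> i \<le> k")
          case True
          then show ?thesis using homog_mult[OF homog_PC[of "\<chi> i"] homog_PV[of "Xi m"]] Xi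
            by (simp add: sig_def wt_def)
        next
          case False then show ?thesis using homog_PV[of v] Xi unfolding sig_def by auto
        qed
      qed
    qed
  }
next
  show "xi_homog p (Mgen m p m)"
  proof -
    have "xi_homog 1 (\<Sum>j = 1..m. PV (Z j) * PV (Xi j))"
    proof (rule homog_sum)
      fix j show "xi_homog 1 (PV (Z j) * PV (Xi j))"
        using homog_mult[OF homog_PV[of "Z j"] homog_PV[of "Xi j"]] by (simp add: wt_def)
    qed
    then have "xi_homog (p * 1) ((\<Sum>j = 1..m. PV (Z j) * PV (Xi j)) ^ p)" by (rule homog_pow)
    moreover have "xi_homog (p * 1) (PV (Xi m) ^ p)" using homog_pow[OF homog_PV[of "Xi m"]]
      by (simp add: wt_def)
    ultimately show ?thesis by (simp add: Mgen_def homog_diff)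
  qed
next
  fix F :: mpoly and n :: nat
  assume F: "vars F \<subseteq> Vk m (m - 1)"
    and L: "loc_eq m p (Vk m (m - 1)) (m - 1) (Mgen m p m * F, n) (0, 0)"
  show "loc_eq m p (Vk m (m - 1)) (m - 1) (F, n) (0, 0)"
    by (rule nzd[OF assms(1) _ Vk_facts _ F L]) (use assms psi_M_ne[OF assms(1), of m m] in auto)
next
  show "regular_sequence m p"
    unfolding regular_sequence_def
  proof (intro conjI ballI allI impI)
    fix i F n
    assume i: "i \<in> {1..m}" and F: "vars F \<subseteq> Vk m m"
      and L: "loc_eq m p (Vk m m) (i - 1) (Mgen m p i * F, n) (0, 0)"
    have W: "\<forall>j. 1 \<le> j \<and> j \<le> i - 1 \<longrightarrow> Xi j \<in> Vk m m" using i by (auto simp: Vk_def)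
    show "loc_eq m p (Vk m m) (i - 1) (F, n) (0, 0)"
      by (rule nzd[OF assms(1) _ Vk_facts(1) W Vk_facts(3) _ F L]) (use i psi_M_ne[OF assms(1), of i m] in auto)
  next
    show "\<not> loc_eq m p (Vk m m) m (1, 0) (0, 0)" by (rule quot_ne0[OF assms(1)])
  qed
qed

end
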